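(* Let $\tau$ be a counterclockwise permutation for monotone non-identical linear functions $f_1,\dots,f_n$. Then the cyclic sequence $(f^{\tau_0},\dots,f^{\tau_{n-1}})$ is strictly unimodal. Moreover, if $f_1,\dots,f_n$ are neither colinear nor potentially identical, then for every $k\in\{0,\dots,n-1\}$ (indices mod $n$, with $\tau_n=\tau_0$), $f^{\tau_k}=f^{\tau_{k+1}}$ implies exactly one of: (i) $f^{\tau_k}=f^{\tau_{k+1}}=\min_{0\le i<n}f^{\tau_i}$ and $\theta(f_{\tau(k+1)})+\pi=_{2\pi}\theta(f^{\tau_k})$; (ii) $f^{\tau_k}=f^{\tau_{k+1}}=\max_{0\le i<n}f^{\tau_i}$ and $\theta(f_{\tau(k+1)})=_{2\pi}\theta(f^{\tau_k})$.
   Context: A linear function is $f(x)=ax+b$; monotone means $a>0$; identical means $f(x)=x$. $\vec f=(b,1-a)^\top$ and $\theta(f)\in[0,2\pi)$ is its polar angle ($\bot$ if $\vec f=0$); $\theta_1=_{2\pi}\theta_2$ means $\theta_1-\theta_2\in2\pi\mathbb{Z}$. For a permutation $\sigma$ of $[n]$, $f^\sigma=f_{\sigma(n)}\circ\cdots\circ f_{\sigma(1)}$; these composites are totally ordered pointwise. $\sigma$ is counterclockwise if, after discarding positions with identical $f_{\sigma(i)}$, there is $k$ with $\theta(f_{\sigma(k)})\le\cdots\le\theta(f_{\sigma(n)})\le\theta(f_{\sigma(1)})\le\cdots\le\theta(f_{\sigma(k-1)})$. $f_1,\dots,f_n$ are colinear if some $\lambda$ satisfies $\theta(f_i)\in\{\lambda,\lambda+\pi\}+2\pi\mathbb{Z}$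 or $\theta(f_i)=\bot$ for all $i$, and potentially identical if $f^\sigma(x)=x$ for some counterclockwise $\sigma$. The $k$-shift is $\tau_k(i)=\tau(i+k)$ for $i\le n-k$, $\tau_k(i)=\tau(i+k-n)$ otherwise. A cyclic sequence $(x_0,\dots,x_{n-1})$ is unimodal if there are $k,\ell$ with $x_k\le x_{k+1}\le\cdots\le x_\ell\ge x_{\ell+1}\ge\cdots\ge x_{k-1}\ge x_k$ (indices mod $n$); it is strictly unimodal if it is unimodal and whenever $x_j=x_{j+1}$ this common value is the minimum or the maximum of the sequence. *)

theory Defs
  imports "HOL-Analysis.Analysis" "HOL-Combinatorics.Permutations"
begin

(* A linear function f(x) = a*x + b is represented by the pair (a, b). *)
type_synonym linfun = "real \<times> real"

definition lapp :: "linfun \<Rightarrow> real \<Rightarrow> real" where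
  "lapp f x = fst f * x + snd f"

(* lcomp g h represents g \<circ> h *)
definition lcomp :: "linfun \<Rightarrow> linfun \<Rightarrow> linfun" where
  "lcomp g h = (fst g * fst h, fst g * snd h + snd g)"

definition monotone_lin :: "linfun \<Rightarrow> bool" where
  "monotone_lin f \<longleftrightarrow> fst f > 0"

definition identical_lin :: "linfun \<Rightarrow> bool" where
  "identical_lin f \<longleftrightarrow> f = (1, 0)"

definition lin_le :: "linfun \<Rightarrow> linfun \<Rightarrow> bool" where
  "lin_le g h \<longleftrightarrow> (\<forall>x. lapp g x \<le> lapp h x)"

definition vecf :: "linfun \<Rightarrow> real \<times> real" where
  "vecf f = (snd f, 1 - fst f)"

(* polar angle in [0, 2pi); None plays the role of \<bottom> *)
definition theta :: "linfun \<Rightarrow> real option" where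
  "theta f = (if vecf f = (0, 0) then None
              else Some (Arg2pi (Complex (fst (vecf f)) (snd (vecf f)))))"

(* theta1 =_{2pi} theta2 (only for defined angles) *)
definition cong2pi :: "real option \<Rightarrow> real option \<Rightarrow> bool" where
  "cong2pi t1 t2 \<longleftrightarrow> (\<exists>x y. t1 = Some x \<and> t2 = Some y \<and> (\<exists>m::int. x - y = 2 * pi * of_int m))"

(* f^\<sigma> restricted to the first m positions: f_{\<sigma> m} \<circ> ... \<circ> f_{\<sigma> 1};
   the composite f^\<sigma> is comp_seq f \<sigma> n *)
fun comp_seq :: "(nat \<Rightarrow> linfun) \<Rightarrow> (nat \<Rightarrow> nat) \<Rightarrow> nat \<Rightarrow> linfun" where
  "comp_seq f \<sigma> 0 = (1, 0)"
| "comp_seq f \<sigma> (Suc m) = lcomp (f (\<sigma> (Suc m))) (comp_seq f \<sigma> m)"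

definition counterclockwise :: "(nat \<Rightarrow> linfun) \<Rightarrow> nat \<Rightarrow> (nat \<Rightarrow> nat) \<Rightarrow> bool" where
  "counterclockwise f n \<sigma> \<longleftrightarrow>
     (\<exists>k. sorted (rotate k (map (\<lambda>i. the (theta (f (\<sigma> i))))
                           (filter (\<lambda>i. \<not> identical_lin (f (\<sigma> i))) [1..<n+1]))))"

definition colinear :: "(nat \<Rightarrow> linfun) \<Rightarrow> nat \<Rightarrow> bool" where
  "colinear f n \<longleftrightarrow> (\<exists>lam::real. \<forall>i\<in>{1..n}.
      theta (f i) = None \<or>
      (\<exists>t m. theta (f i) = Some t \<and> (t = lam + 2 * pi * of_int m \<or> t = lam + pi + 2 * pi * of_int m)))"

definition potentially_identical :: "(nat \<Rightarrow> linfun) \<Rightarrow> nat \<Rightarrow> bool" where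
  "potentially_identical f n \<longleftrightarrow>
     (\<exists>\<sigma>. \<sigma> permutes {1..n} \<and> counterclockwise f n \<sigma> \<and> comp_seq f \<sigma> n = (1, 0))"

definition shift :: "(nat \<Rightarrow> nat) \<Rightarrow> nat \<Rightarrow> nat \<Rightarrow> nat \<Rightarrow> nat" where
  "shift \<tau> n k i = (if i \<le> n - k then \<tau> (i + k) else \<tau> (i + k - n))"

definition cyc_unimodal :: "('a \<Rightarrow> 'a \<Rightarrow> bool) \<Rightarrow> nat \<Rightarrow> (nat \<Rightarrow> 'a) \<Rightarrow> bool" where
  "cyc_unimodal le n x \<longleftrightarrow> (\<exists>k l. k < n \<and> l < n \<and>
     (let d = (l + n - k) mod n in
       (\<forall>j<d. le (x ((k + j) mod n)) (x ((k + j + 1) mod n))) \<and>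
       (\<forall>j. d \<le> j \<and> j < n \<longrightarrow> le (x ((k + j + 1) mod n)) (x ((k + j) mod n)))))"

definition cyc_strictly_unimodal :: "('a \<Rightarrow> 'a \<Rightarrow> bool) \<Rightarrow> nat \<Rightarrow> (nat \<Rightarrow> 'a) \<Rightarrow> bool" where
  "cyc_strictly_unimodal le n x \<longleftrightarrow> cyc_unimodal le n x \<and>
     (\<forall>j<n. x j = x ((j + 1) mod n) \<longrightarrow>
        ((\<forall>i<n. le (x j) (x i)) \<or> (\<forall>i<n. le (x i) (x j))))"

end

theory Submission
  imports Defs
begin

definition periodic :: "(nat \<Rightarrow> real) \<Rightarrow> nat \<Rightarrow> bool" where
  "periodic x n \<longleftrightarrow> (\<forall>i. x (i + n) = x i)"

definition PU :: "(nat \<Rightarrow> real) \<Rightarrow> nat \<Rightarrow> bool" where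
  "PU x n \<longleftrightarrow> (\<exists>k d. d < n \<and> (\<forall>j<d. x (k+j) \<le> x (k+j+1)) \<and>
     (\<forall>j. d \<le> j \<and> j < n \<longrightarrow> x (k+j+1) \<le> x (k+j)))"

definition PS :: "(nat \<Rightarrow> real) \<Rightarrow> bool" where
  "PS x \<longleftrightarrow> (\<forall>j. x j = x (Suc j) \<longrightarrow> (\<forall>i. x j \<le> x i) \<or> (\<forall>i. x i \<le> x j))"

lemma per_mult: "periodic x n \<Longrightarrow> x (i + m * n) = x i"
proof (induction m)
  case (Suc m)
  have e: "i + Suc m * n = (i + m * n) + n" by simp
  have "x ((i + m * n) + n) = x (i + m * n)" using Suc.prems unfolding periodic_def by blast
  then show ?case unfolding e using Suc.IH Suc.prems by simp
qed simp

lemma per_mod: "periodic x n \<Longrightarrow> x (i mod n) = x i"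
proof -
  assume p: "periodic x n"
  have "x (i mod n + (i div n) * n) = x (i mod n)" using per_mult[OF p] .
  moreover have "i mod n + (i div n) * n = i" by simp
  ultimately show ?thesis by simp
qed

lemma chain_inc:
  assumes "\<forall>j. a \<le> j \<and> j < b \<longrightarrow> (y j :: real) \<le> y (Suc j)" "a \<le> i" "i \<le> i'" "i' \<le> b"
  shows "y i \<le> y i'"
  using assms(3,4)
proof (induction i')
  case 0 then show ?case by simp
next
  case (Suc m)
  show ?case
  proof (cases "i = Suc m")
    case False
    then have "i \<le> m" using Suc by simp
    then have "y i \<le> y m" using Suc by simp
    also have "\<dots> \<le> y (Suc m)" using assms(1,2) Suc \<open>i \<le> m\<close> by simp
    finally show ?thesis .
  qed simp
qed

lemma chain_dec:
  assumes "\<forall>j. a \<le> j \<and> j < b \<longrightarrow> (y (Suc j) :: real) \<le> y j" "a \<le> i" "i \<le> i'" "i' \<le> b"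
  shows "y i' \<le> y i"
  using chain_inc[of a b "\<lambda>j. - y j" i i'] assms by simp

lemma PU_neg:
  assumes per: "periodic x n" and pu: "PU x n"
  shows "PU (\<lambda>i. - x i) n"
proof -
  obtain k d where d: "d < n" and inc: "\<forall>j<d. x (k+j) \<le> x (k+j+1)"
    and dec: "\<forall>j. d \<le> j \<and> j < n \<longrightarrow> x (k+j+1) \<le> x (k+j)"
    using pu unfolding PU_def by blast
  show ?thesis
  proof (cases "d = 0")
    case True
    have dd: "\<forall>j. 0 \<le> j \<and> j < n \<longrightarrow> x (k + Suc j) \<le> x (k + j)" using dec True by simp
    have eq: "x (k + j) = x k" if "j \<le> n" for j
    proof -
      have "x (k + j) \<le> x (k + 0)" using chain_dec[OF dd, of 0 j] that by simp
      moreover have "x (k + n) \<le> x (k + j)" using chain_dec[OF dd, of j n] that by simp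
      moreover have "x (k + n) = x k" using per unfolding periodic_def by simp
      ultimately show ?thesis by simp
    qed
    show ?thesis unfolding PU_def
    proof (rule exI[of _ k], rule exI[of _ 0], intro conjI allI impI)
      fix j assume j: "0 \<le> j \<and> j < n"
      have "x (k + j + 1) = x k" using eq[of "j+1"] j by (simp add: add.assoc)
      moreover have "x (k + j) = x k" using eq[of j] j by simp
      ultimately show "- x (k + j + 1) \<le> - x (k + j)" by simp
    qed (use d in auto)
  next
    case False
    show ?thesis unfolding PU_def
    proof (rule exI[of _ "k + d"], rule exI[of _ "n - d"], intro conjI allI impI)
      show "n - d < n" using False d by simp
    next
      fix j assume "j < n - d"
      then show "- x (k + d + j) \<le> - x (k + d + j + 1)"
        using dec[rule_format, of "d + j"] by (simp add: add.assoc)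
    next
      fix j assume j: "n - d \<le> j \<and> j < n"
      have a1: "k + d + j = k + (d + j - n) + n" using j by arith
      have a2: "k + d + j + 1 = k + (d + j - n) + 1 + n" using j by arith
      have e1: "x (k + d + j) = x (k + (d + j - n))"
        using per unfolding periodic_def by (metis a1)
      have e2: "x (k + d + j + 1) = x (k + (d + j - n) + 1)"
        using per unfolding periodic_def by (metis a2)
      have "d + j - n < d" using j d by arith
      then show "- x (k + d + j + 1) \<le> - x (k + d + j)"
        using inc e1 e2 by simp
    qed
  qed
qed

lemma PU_scale:
  assumes "PU x n" "(c::real) > 0" shows "PU (\<lambda>i. c * x i) n"
  using assms unfolding PU_def by (meson mult_left_mono less_imp_le)

lemma PU_shift: "PU (\<lambda>t. x (r + t)) n \<Longrightarrow> PU x n"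
proof -
  assume "PU (\<lambda>t. x (r + t)) n"
  then obtain k d where "d < n" "\<forall>j<d. x (r + (k+j)) \<le> x (r + (k+j+1))"
    "\<forall>j. d \<le> j \<and> j < n \<longrightarrow> x (r + (k+j+1)) \<le> x (r + (k+j))"
    unfolding PU_def by blast
  then show ?thesis unfolding PU_def
    by (intro exI[of _ "r + k"] exI[of _ d]) (simp add: add.assoc)
qed

lemma PS_neg: "PS x \<Longrightarrow> PS (\<lambda>i. - x i)"
  unfolding PS_def by auto

lemma PS_scale: "PS x \<Longrightarrow> (c::real) > 0 \<Longrightarrow> PS (\<lambda>i. c * x i)"
  unfolding PS_def by auto

lemma PS_shift:
  assumes "PS (\<lambda>t. x (r + t))" "periodic x n" "r \<le> n"
  shows "PS x"
  unfolding PS_def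
proof (intro allI impI)
  fix j assume h: "x j = x (Suc j)"
  have xe: "x i = x (r + (i + n - r))" for i
    using assms(2,3) unfolding periodic_def by simp
  have "x (r + (j + n - r)) = x (r + Suc (j + n - r))"
    using h xe[of j] xe[of "Suc j"] assms(3) by (simp add: Suc_diff_le)
  then have o: "(\<forall>i. x (r + (j + n - r)) \<le> x (r + i)) \<or> (\<forall>i. x (r + i) \<le> x (r + (j + n - r)))"
    using assms(1)[unfolded PS_def, rule_format, of "j + n - r"] by simp
  have xj: "x (r + (j + n - r)) = x j" using xe[of j] by simp
  show "(\<forall>i. x j \<le> x i) \<or> (\<forall>i. x i \<le> x j)"
  proof (cases "\<forall>i. x (r + (j + n - r)) \<le> x (r + i)")
    case True
    have "\<forall>i. x j \<le> x i"
    proof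
      fix i show "x j \<le> x i" using True[rule_format, of "i + n - r"] xe[of i] xj by simp
    qed
    then show ?thesis by blast
  next
    case False
    then have oo: "\<forall>i. x (r + i) \<le> x (r + (j + n - r))" using o by blast
    have "\<forall>i. x i \<le> x j"
    proof
      fix i show "x i \<le> x j" using oo[rule_format, of "i + n - r"] xe[of i] xj by simp
    qed
    then show ?thesis by blast
  qed
qed

lemma PU_cyc:
  assumes per: "periodic x n" and n: "n \<ge> 1" and pu: "PU x n"
  shows "cyc_unimodal (\<le>) n x"
proof -
  obtain k d where d: "d < n" and inc: "\<forall>j<d. x (k+j) \<le> x (k+j+1)"
    and dec: "\<forall>j. d \<le> j \<and> j < n \<longrightarrow> x (k+j+1) \<le> x (k+j)"
    using pu unfolding PU_def by blast
  define k' where "k' = k mod n"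
  define l where "l = (k + d) mod n"
  have dl: "(l + n - k') mod n = d"
  proof -
    have "(k' + d) mod n = l" unfolding k'_def l_def by (simp add: mod_add_left_eq)
    show ?thesis
    proof (cases "k' + d < n")
      case True
      then have "l = k' + d" using \<open>(k' + d) mod n = l\<close> by simp
      then show ?thesis using d by simp
    next
      case False
      have "k' < n" unfolding k'_def using n by simp
      then have "l = k' + d - n" using \<open>(k' + d) mod n = l\<close> False d
        by (simp add: le_mod_geq)
      then show ?thesis using False d \<open>k' < n\<close> by simp
    qed
  qed
  have xk: "x ((k' + j) mod n) = x (k + j)" for j
    using per_mod[OF per] unfolding k'_def by (metis mod_add_left_eq)
  have xk1: "x ((k' + j + 1) mod n) = x (k + j + 1)" for j
    using xk[of "j+1"] by (simp add: add.assoc)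
  have kn: "k' < n" "l < n" unfolding k'_def l_def using n by auto
  show ?thesis unfolding cyc_unimodal_def Let_def
  proof (rule exI[of _ k'], rule exI[of _ l], unfold dl, intro conjI allI impI)
    fix j assume "j < d"
    then show "x ((k' + j) mod n) \<le> x ((k' + j + 1) mod n)"
      unfolding xk xk1 using inc by simp
  next
    fix j assume "d \<le> j \<and> j < n"
    then show "x ((k' + j + 1) mod n) \<le> x ((k' + j) mod n)"
      unfolding xk xk1 using dec by simp
  qed (use kn in auto)
qed

lemma PS_cyc:
  assumes per: "periodic x n" and ps: "PS x"
  shows "\<forall>j<n. x j = x ((j + 1) mod n) \<longrightarrow> ((\<forall>i<n. x j \<le> x i) \<or> (\<forall>i<n. x i \<le> x j))"
proof (intro allI impI)
  fix j assume j: "j < n" "x j = x ((j + 1) mod n)"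
  have "x ((j + 1) mod n) = x (Suc j)" using per_mod[OF per, of "j+1"] by simp
  then have "(\<forall>i. x j \<le> x i) \<or> (\<forall>i. x i \<le> x j)" using ps j unfolding PS_def by simp
  then show "(\<forall>i<n. x j \<le> x i) \<or> (\<forall>i<n. x i \<le> x j)" by blast
qed

lemma cyc_su:
  assumes "periodic x n" "n \<ge> 1" "PU x n" "PS x"
  shows "cyc_strictly_unimodal (\<le>) n x"
  unfolding cyc_strictly_unimodal_def using PU_cyc[OF assms(1-3)] PS_cyc[OF assms(1,4)] by blast

lemma lemU:
  fixes x :: "nat \<Rightarrow> real"
  assumes per: "periodic x n" and n: "n \<ge> 1"
    and s: "s1 \<le> s2" "s2 \<le> s3" "s3 \<le> s4" "s4 \<le> n"
    and pat: "\<forall>t<n. (t < s1 \<longrightarrow> x t < x (Suc t)) \<and> (s1 \<le> t \<and> t < s2 \<longrightarrow> x (Suc t) = x t)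
       \<and> (s2 \<le> t \<and> t < s3 \<longrightarrow> x (Suc t) < x t) \<and> (s3 \<le> t \<and> t < s4 \<longrightarrow> x (Suc t) = x t)
       \<and> (s4 \<le> t \<longrightarrow> x t < x (Suc t))"
  shows "PU x n" "PS x" "\<forall>t. s1 \<le> t \<and> t \<le> s2 \<longrightarrow> (\<forall>i. x i \<le> x t)"
    "\<forall>t. s3 \<le> t \<and> t \<le> s4 \<longrightarrow> (\<forall>i. x t \<le> x i)"
proof -
  have pern: "x (a + n) = x a" for a using per unfolding periodic_def by blast
  have xn: "x n = x 0" using pern[of 0] by simp
  have i02: "\<forall>j. 0 \<le> j \<and> j < s2 \<longrightarrow> x j \<le> x (Suc j)"
  proof (intro allI impI)
    fix j assume j: "0 \<le> j \<and> j < s2"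
    then have "j < n" using s by simp
    then show "x j \<le> x (Suc j)" using pat j by (cases "j < s1") (auto simp: less_imp_le)
  qed
  have d13: "\<forall>j. s1 \<le> j \<and> j < s3 \<longrightarrow> x (Suc j) \<le> x j"
  proof (intro allI impI)
    fix j assume j: "s1 \<le> j \<and> j < s3"
    then have "j < n" using s by simp
    then show "x (Suc j) \<le> x j" using pat j by (cases "j < s2") (auto simp: less_imp_le)
  qed
  have d24: "\<forall>j. s2 \<le> j \<and> j < s4 \<longrightarrow> x (Suc j) \<le> x j"
  proof (intro allI impI)
    fix j assume j: "s2 \<le> j \<and> j < s4"
    then have "j < n" using s by simp
    then show "x (Suc j) \<le> x j" using pat j by (cases "j < s3") (auto simp: less_imp_le)
  qed
  have i3n: "\<forall>j. s3 \<le> j \<and> j < n \<longrightarrow> x j \<le> x (Suc j)"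
  proof (intro allI impI)
    fix j assume j: "s3 \<le> j \<and> j < n"
    then show "x j \<le> x (Suc j)" using pat j by (cases "j < s4") (auto simp: less_imp_le)
  qed
  have maxp: "\<forall>i. x i \<le> x t" if t: "s1 \<le> t" "t \<le> s2" for t
  proof
    fix i
    have tt: "x t = x s1"
      using chain_inc[OF i02, of s1 t] chain_dec[OF d13, of s1 t] t s by simp
    have "x (i mod n) \<le> x s1"
    proof -
      have im: "i mod n < n" using n by simp
      consider "i mod n \<le> s1" | "s1 \<le> i mod n \<and> i mod n \<le> s3" | "s3 \<le> i mod n" by linarith
      then show ?thesis
      proof cases
        case 1 then show ?thesis using chain_inc[OF i02, of "i mod n" s1] s by simp
      next
        case 2 then show ?thesis using chain_dec[OF d13, of s1 "i mod n"] s by simp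
      next
        case 3
        have "x (i mod n) \<le> x n" using chain_inc[OF i3n, of "i mod n" n] 3 im by simp
        moreover have "x 0 \<le> x s1" using chain_inc[OF i02, of 0 s1] s by simp
        ultimately show ?thesis using xn by simp
      qed
    qed
    then show "x i \<le> x t" using tt per_mod[OF per] by simp
  qed
  have minp: "\<forall>i. x t \<le> x i" if t: "s3 \<le> t" "t \<le> s4" for t
  proof
    fix i
    have tt: "x t = x s3"
      using chain_inc[OF i3n, of s3 t] chain_dec[OF d24, of s3 t] t s by simp
    have "x s3 \<le> x (i mod n)"
    proof -
      have im: "i mod n < n" using n by simp
      consider "i mod n \<le> s2" | "s2 \<le> i mod n \<and> i mod n \<le> s3" | "s3 \<le> i mod n" by linarith
      then show ?thesis
      proof cases
        case 1
        have "x 0 \<le> x (i mod n)" using chain_inc[OF i02, of 0 "i mod n"] 1 by simp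
        moreover have "x s3 \<le> x n" using chain_inc[OF i3n, of s3 n] s by simp
        ultimately show ?thesis using xn by simp
      next
        case 2 then show ?thesis using chain_dec[OF d24, of "i mod n" s3] s by simp
      next
        case 3
        then show ?thesis using chain_inc[OF i3n, of s3 "i mod n"] im by simp
      qed
    qed
    then show "x t \<le> x i" using tt per_mod[OF per] by simp
  qed
  show "\<forall>t. s1 \<le> t \<and> t \<le> s2 \<longrightarrow> (\<forall>i. x i \<le> x t)" using maxp by blast
  show "\<forall>t. s3 \<le> t \<and> t \<le> s4 \<longrightarrow> (\<forall>i. x t \<le> x i)" using minp by blast
  show "PS x" unfolding PS_def
  proof (intro allI impI)
    fix j assume h: "x j = x (Suc j)"
    define t where "t = j mod n"
    have tn: "t < n" unfolding t_def using n by simp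
    have xs: "x (Suc t) = x (Suc j)"
    proof -
      have "x (Suc t) = x (Suc t mod n)" using per_mod[OF per] by simp
      also have "Suc t mod n = Suc j mod n" unfolding t_def by (simp add: mod_Suc_eq)
      also have "x (Suc j mod n) = x (Suc j)" using per_mod[OF per] by simp
      finally show ?thesis .
    qed
    have xt: "x t = x j" unfolding t_def using per_mod[OF per] by simp
    have ht: "x t = x (Suc t)" using h xs xt by simp
    have "(s1 \<le> t \<and> t < s2) \<or> (s3 \<le> t \<and> t < s4)"
      using pat[rule_format, OF tn] ht by force
    then show "(\<forall>i. x j \<le> x i) \<or> (\<forall>i. x i \<le> x j)"
      using maxp[of t] minp[of t] xt by force
  qed
  show "PU x n"
  proof (cases "s2 = s3")
    case True
    have ia: "\<forall>j. 0 \<le> j \<and> j < n \<longrightarrow> x j \<le> x (Suc j)"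
    proof (intro allI impI)
      fix j assume j: "0 \<le> j \<and> j < n"
      show "x j \<le> x (Suc j)"
      proof (cases "j < s2")
        case True then show ?thesis using i02 by simp
      next
        case False
        then show ?thesis using i3n j True s by simp
      qed
    qed
    have eq: "x j = x 0" if "j \<le> n" for j
      using chain_inc[OF ia, of 0 j] chain_inc[OF ia, of j n] that xn by simp
    show ?thesis unfolding PU_def
    proof (rule exI[of _ 0], rule exI[of _ 0], intro conjI allI impI)
      fix j assume j: "0 \<le> j \<and> j < n"
      then show "x (0 + j + 1) \<le> x (0 + j)" using eq[of j] eq[of "j+1"] by simp
    qed (use n in auto)
  next
    case False
    then have s13: "s1 < s3" using s by simp
    show ?thesis unfolding PU_def
    proof (rule exI[of _ s3], rule exI[of _ "n - s3 + s1"], intro conjI allI impI)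
      show "n - s3 + s1 < n" using s13 s by simp
    next
      fix j assume j: "j < n - s3 + s1"
      show "x (s3 + j) \<le> x (s3 + j + 1)"
      proof (cases "s3 + j < n")
        case True then show ?thesis using i3n by simp
      next
        case False
        define u where "u = s3 + j - n"
        have u: "s3 + j = u + n" "u < s1" unfolding u_def using False j s by auto
        have "x u \<le> x (Suc u)" using i02 u s by simp
        then show ?thesis using u pern[of u] pern[of "Suc u"] by simp
      qed
    next
      fix j assume j: "n - s3 + s1 \<le> j \<and> j < n"
      define u where "u = s3 + j - n"
      have u: "s3 + j = u + n" "s1 \<le> u" "u < s3" unfolding u_def using j s by auto
      have "x (Suc u) \<le> x u" using d13 u by simp
      then show "x (s3 + j + 1) \<le> x (s3 + j)" using u pern[of u] pern[of "Suc u"] by simp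
    qed
  qed
qed


lemma lcomp_assoc: "lcomp (lcomp a b) c = lcomp a (lcomp b c)"
  unfolding lcomp_def by (simp add: algebra_simps)

lemma lcomp_id1 [simp]: "lcomp (1, 0) g = g" and lcomp_id2 [simp]: "lcomp g (1, 0) = g"
  unfolding lcomp_def by auto

lemma comp_seq_cong:
  "(\<forall>i. 1 \<le> i \<and> i \<le> m \<longrightarrow> \<sigma> i = \<sigma>' i) \<Longrightarrow> comp_seq f \<sigma> m = comp_seq f \<sigma>' m"
  by (induction m) auto

lemma comp_seq_add:
  "comp_seq f \<sigma> (a + m) = lcomp (comp_seq f (\<lambda>i. \<sigma> (i + a)) m) (comp_seq f \<sigma> a)"
proof (induction m)
  case (Suc m)
  have "comp_seq f \<sigma> (a + Suc m) = lcomp (f (\<sigma> (Suc (a + m)))) (comp_seq f \<sigma> (a + m))" by simp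
  also have "\<dots> = lcomp (f (\<sigma> (Suc m + a))) (lcomp (comp_seq f (\<lambda>i. \<sigma> (i + a)) m) (comp_seq f \<sigma> a))"
    using Suc by (simp add: add.commute)
  also have "\<dots> = lcomp (comp_seq f (\<lambda>i. \<sigma> (i + a)) (Suc m)) (comp_seq f \<sigma> a)"
    by (simp add: lcomp_assoc)
  finally show ?case .
qed simp

lemma F_split:
  assumes "k \<le> n"
  shows "comp_seq f (shift \<tau> n k) n = lcomp (comp_seq f \<tau> k) (comp_seq f (\<lambda>i. \<tau> (i + k)) (n - k))"
proof -
  have "comp_seq f (shift \<tau> n k) n = comp_seq f (shift \<tau> n k) ((n - k) + k)" using assms by simp
  also have "\<dots> = lcomp (comp_seq f (\<lambda>i. shift \<tau> n k (i + (n - k))) k) (comp_seq f (shift \<tau> n k) (n - k))"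
    by (rule comp_seq_add)
  also have "comp_seq f (\<lambda>i. shift \<tau> n k (i + (n - k))) k = comp_seq f \<tau> k"
    by (rule comp_seq_cong) (use assms in \<open>auto simp: shift_def\<close>)
  also have "comp_seq f (shift \<tau> n k) (n - k) = comp_seq f (\<lambda>i. \<tau> (i + k)) (n - k)"
    by (rule comp_seq_cong) (use assms in \<open>auto simp: shift_def\<close>)
  finally show ?thesis .
qed

lemma F_step:
  assumes "k < n"
  shows "lcomp (comp_seq f (shift \<tau> n (Suc k)) n) (f (\<tau> (Suc k)))
       = lcomp (f (\<tau> (Suc k))) (comp_seq f (shift \<tau> n k) n)"
proof -
  define L where "L = comp_seq f \<tau> k"
  define R1 where "R1 = comp_seq f (\<lambda>i. \<tau> (i + Suc k)) (n - Suc k)"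
  have R: "comp_seq f (\<lambda>i. \<tau> (i + k)) (n - k) = lcomp R1 (f (\<tau> (Suc k)))"
  proof -
    have e: "n - k = 1 + (n - Suc k)" using assms by simp
    have "comp_seq f (\<lambda>i. \<tau> (i + k)) (n - k) = comp_seq f (\<lambda>i. \<tau> (i + k)) (1 + (n - Suc k))"
      by (simp only: e)
    also have "\<dots> = lcomp (comp_seq f (\<lambda>i. \<tau> (i + 1 + k)) (n - Suc k)) (comp_seq f (\<lambda>i. \<tau> (i + k)) 1)"
      by (rule comp_seq_add)
    also have "\<dots> = lcomp R1 (f (\<tau> (Suc k)))" unfolding R1_def by simp
    finally show ?thesis .
  qed
  have "comp_seq f (shift \<tau> n (Suc k)) n = lcomp (lcomp (f (\<tau> (Suc k))) L) R1"
    using F_split[of "Suc k" n f \<tau>] assms unfolding L_def R1_def by simp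
  moreover have "comp_seq f (shift \<tau> n k) n = lcomp L (lcomp R1 (f (\<tau> (Suc k))))"
    using F_split[of k n f \<tau>] assms R unfolding L_def by simp
  ultimately show ?thesis by (simp add: lcomp_assoc)
qed

lemma F_0: "comp_seq f (shift \<tau> n 0) n = comp_seq f \<tau> n"
  by (rule comp_seq_cong) (auto simp: shift_def)

lemma F_n: "comp_seq f (shift \<tau> n n) n = comp_seq f \<tau> n"
  by (rule comp_seq_cong) (auto simp: shift_def)


lemma no_half_int: "\<not> (\<exists>m::int. pi = 2 * pi * of_int m)"
proof
  assume "\<exists>m::int. pi = 2 * pi * of_int m"
  then obtain m :: int where "pi = 2 * pi * of_int m" by blast
  then have "1 = 2 * (of_int m :: real)" using pi_gt_zero
    by (metis mult.assoc mult.commute mult_cancel_right1 pi_neq_zero)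
  then have "(1::int) = 2 * m" by (metis of_int_1 of_int_eq_iff of_int_mult of_int_numeral)
  then show False by presburger
qed

lemma no_half_int2: "\<not> (\<exists>m::int. - pi = 2 * pi * of_int m)"
proof
  assume "\<exists>m::int. - pi = 2 * pi * of_int m"
  then obtain m :: int where "- pi = 2 * pi * of_int m" by blast
  then have "pi = 2 * pi * of_int (- m)" by simp
  then show False using no_half_int by blast
qed

lemma final_angle:
  assumes v: "v \<noteq> 0" and W: "W = complex_of_real lam * v" and lam: "lam \<noteq> 0"
    and mx: "lam > 0 \<Longrightarrow> MX" and mn: "lam < 0 \<Longrightarrow> MN"
  shows "((MN \<and> cong2pi (Some (Arg2pi v + pi)) (Some (Arg2pi W))) \<and> \<not> (MX \<and> cong2pi (Some (Arg2pi v)) (Some (Arg2pi W))))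
       \<or> (\<not> (MN \<and> cong2pi (Some (Arg2pi v + pi)) (Some (Arg2pi W))) \<and> (MX \<and> cong2pi (Some (Arg2pi v)) (Some (Arg2pi W))))"
proof (cases "lam > 0")
  case True
  then have e: "Arg2pi W = Arg2pi v" using W by simp
  have c1: "cong2pi (Some (Arg2pi v)) (Some (Arg2pi W))" unfolding cong2pi_def e
    by (intro exI[of _ "Arg2pi v"] exI[of _ "Arg2pi v"]) (auto intro: exI[of _ 0])
  have c2: "\<not> cong2pi (Some (Arg2pi v + pi)) (Some (Arg2pi W))" unfolding cong2pi_def e
    using no_half_int by auto
  show ?thesis using c1 c2 mx True by blast
next
  case False
  then have l: "lam < 0" using lam by simp
  have W': "W = complex_of_real (- lam) * (- v)" using W by simp
  have e: "Arg2pi W = (if Arg2pi v < pi then Arg2pi v + pi else Arg2pi v - pi)"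
  proof -
    have "Arg2pi W = Arg2pi (- v)" unfolding W' using l Arg2pi_times_of_real[of "- lam" "- v"] by simp
    then show ?thesis using Arg2pi_minus[OF v] by simp
  qed
  have c1: "cong2pi (Some (Arg2pi v + pi)) (Some (Arg2pi W))"
  proof (cases "Arg2pi v < pi")
    case True then show ?thesis unfolding cong2pi_def e by (auto intro: exI[of _ 0])
  next
    case False then show ?thesis unfolding cong2pi_def e by (auto intro: exI[of _ 1])
  qed
  have c2: "\<not> cong2pi (Some (Arg2pi v)) (Some (Arg2pi W))"
  proof (cases "Arg2pi v < pi")
    case True then show ?thesis unfolding cong2pi_def e using no_half_int2 by auto
  next
    case False then show ?thesis unfolding cong2pi_def e using no_half_int by auto
  qed
  show ?thesis using c1 c2 mn l by blast
qed


lemma cross_nonneg: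
  assumes "Arg2pi z \<le> Arg2pi w" "Arg2pi w < Arg2pi z + pi"
  shows "0 \<le> Re z * Im w - Im z * Re w"
proof -
  have "Re z * Im w - Im z * Re w
      = (cmod z * cos (Arg2pi z)) * (cmod w * sin (Arg2pi w)) - (cmod z * sin (Arg2pi z)) * (cmod w * cos (Arg2pi w))"
    by (simp add: cos_Arg2pi sin_Arg2pi)
  also have "\<dots> = cmod z * cmod w * sin (Arg2pi w - Arg2pi z)"
    by (simp add: sin_diff algebra_simps)
  also have "\<dots> \<ge> 0"
    using assms by (intro mult_nonneg_nonneg sin_ge_zero) auto
  finally show ?thesis .
qed

lemma upto_induct:
  assumes "P s" "\<forall>t. s \<le> t \<and> Suc t < b \<and> P t \<longrightarrow> P (Suc t)"
  shows "s \<le> t \<Longrightarrow> t < b \<Longrightarrow> P t"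
proof (induction t)
  case 0 then show ?case using assms by simp
next
  case (Suc t)
  show ?case
  proof (cases "s = Suc t")
    case True then show ?thesis using assms by simp
  next
    case False
    then have "s \<le> t" using Suc by simp
    then have "P t" using Suc by simp
    then show ?thesis using assms(2) \<open>s \<le> t\<close> Suc by blast
  qed
qed

lemma threshold:
  assumes "a \<le> b" "\<forall>t. a \<le> t \<and> Suc t < b \<and> P t \<longrightarrow> P (Suc t)"
  shows "\<exists>s. a \<le> s \<and> s \<le> b \<and> (\<forall>t. a \<le> t \<and> t < b \<longrightarrow> (P t \<longleftrightarrow> s \<le> t))"
proof (cases "\<exists>t. a \<le> t \<and> t < b \<and> P t")
  case True
  define s where "s = (LEAST t. a \<le> t \<and> t < b \<and> P t)"
  have s: "a \<le> s \<and> s < b \<and> P s" unfolding s_def using True by (metis (mono_tags, lifting) LeastI)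
  have lt: "t < s \<Longrightarrow> \<not> (a \<le> t \<and> t < b \<and> P t)" for t unfolding s_def by (rule not_less_Least)
  have ge: "s \<le> t \<Longrightarrow> t < b \<Longrightarrow> P t" for t
    by (rule upto_induct[of P s b]) (use s assms(2) in auto)
  show ?thesis
  proof (rule exI[of _ s], intro conjI allI impI)
    fix t assume t: "a \<le> t \<and> t < b"
    show "P t \<longleftrightarrow> s \<le> t"
    proof
      assume "P t" then show "s \<le> t" using lt t by (meson not_le)
    next
      assume "s \<le> t" then show "P t" using ge t by simp
    qed
  qed (use s in auto)
next
  case False
  then show ?thesis using assms(1) by (intro exI[of _ b]) auto
qed

lemma classes:
  fixes \<Theta> :: "nat \<Rightarrow> real" and v :: "nat \<Rightarrow> complex"
  assumes nz: "\<forall>t<n. v t \<noteq> 0" and th: "\<forall>t<n. \<Theta> t = Arg2pi (v t)"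
    and srt: "\<forall>t t'. t \<le> t' \<and> t' < n \<longrightarrow> \<Theta> t \<le> \<Theta> t'"
  shows "\<exists>c1 c2 c3. c1 \<le> c2 \<and> c2 \<le> c3 \<and> c3 \<le> n \<and>
    (\<forall>t<n. (t < c1 \<longrightarrow> Im (v t) = 0 \<and> Re (v t) > 0) \<and>
           (c1 \<le> t \<and> t < c2 \<longrightarrow> Im (v t) > 0 \<and> 0 < \<Theta> t \<and> \<Theta> t < pi) \<and>
           (c2 \<le> t \<and> t < c3 \<longrightarrow> Im (v t) = 0 \<and> Re (v t) < 0) \<and>
           (c3 \<le> t \<longrightarrow> Im (v t) < 0 \<and> pi < \<Theta> t \<and> \<Theta> t < 2 * pi))"
proof -
  have loc: "\<forall>t. 0 \<le> t \<and> Suc t < n \<and> P (\<Theta> t) \<longrightarrow> P (\<Theta> (Suc t))"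
    if "\<And>a b. a \<le> b \<Longrightarrow> P a \<Longrightarrow> P b" for P
    using srt that by (meson le_SucI order_refl)
  obtain c1 where c1: "c1 \<le> n" "\<forall>t. 0 \<le> t \<and> t < n \<longrightarrow> (0 < \<Theta> t \<longleftrightarrow> c1 \<le> t)"
    using threshold[of 0 n "\<lambda>t. 0 < \<Theta> t"] loc[of "\<lambda>a. 0 < a"] by auto
  obtain c2 where c2: "c2 \<le> n" "\<forall>t. 0 \<le> t \<and> t < n \<longrightarrow> (pi \<le> \<Theta> t \<longleftrightarrow> c2 \<le> t)"
    using threshold[of 0 n "\<lambda>t. pi \<le> \<Theta> t"] loc[of "\<lambda>a. pi \<le> a"] by auto
  obtain c3 where c3: "c3 \<le> n" "\<forall>t. 0 \<le> t \<and> t < n \<longrightarrow> (pi < \<Theta> t \<longleftrightarrow> c3 \<le> t)"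
    using threshold[of 0 n "\<lambda>t. pi < \<Theta> t"] loc[of "\<lambda>a. pi < a"] by auto
  have c12: "c1 \<le> c2"
  proof (cases "c2 < n")
    case True
    then have "pi \<le> \<Theta> c2" using c2 by simp
    then have "0 < \<Theta> c2" using pi_gt_zero by linarith
    then show ?thesis using c1 True by simp
  qed (use c1 c2 in simp)
  have c23: "c2 \<le> c3"
  proof (cases "c3 < n")
    case True
    then have "pi < \<Theta> c3" using c3 by simp
    then have "pi \<le> \<Theta> c3" by simp
    then show ?thesis using c2 True by simp
  qed (use c2 c3 in simp)
  have main: "(t < c1 \<longrightarrow> Im (v t) = 0 \<and> Re (v t) > 0) \<and>
           (c1 \<le> t \<and> t < c2 \<longrightarrow> Im (v t) > 0 \<and> 0 < \<Theta> t \<and> \<Theta> t < pi) \<and>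
           (c2 \<le> t \<and> t < c3 \<longrightarrow> Im (v t) = 0 \<and> Re (v t) < 0) \<and>
           (c3 \<le> t \<longrightarrow> Im (v t) < 0 \<and> pi < \<Theta> t \<and> \<Theta> t < 2 * pi)" if tn: "t < n" for t
  proof -
    have T: "\<Theta> t = Arg2pi (v t)" using th tn by simp
    have ge0: "0 \<le> \<Theta> t" unfolding T by (rule Arg2pi_ge_0)
    have lt2: "\<Theta> t < 2 * pi" unfolding T by (rule Arg2pi_lt_2pi)
    have vnz: "v t \<noteq> 0" using nz tn by simp
    have A1: "t < c1 \<longrightarrow> Im (v t) = 0 \<and> Re (v t) > 0"
    proof
      assume "t < c1"
      then have "\<not> 0 < \<Theta> t" using c1(2)[rule_format, of t] tn by simp
      then have "\<Theta> t = 0" using ge0 by simp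
      then have "v t \<in> \<real> \<and> 0 \<le> Re (v t)" using Arg2pi_eq_0 T by simp
      then show "Im (v t) = 0 \<and> Re (v t) > 0" using vnz
        by (metis complex_is_Real_iff complex_eq_iff less_eq_real_def zero_complex.simps)
    qed
    have A2: "c1 \<le> t \<and> t < c2 \<longrightarrow> Im (v t) > 0 \<and> 0 < \<Theta> t \<and> \<Theta> t < pi"
    proof
      assume a: "c1 \<le> t \<and> t < c2"
      then have "0 < \<Theta> t \<and> \<Theta> t < pi" using c1(2)[rule_format, of t] c2(2)[rule_format, of t] tn by simp
      then show "Im (v t) > 0 \<and> 0 < \<Theta> t \<and> \<Theta> t < pi" using Arg2pi_lt_pi T by simp
    qed
    have A3: "c2 \<le> t \<and> t < c3 \<longrightarrow> Im (v t) = 0 \<and> Re (v t) < 0"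
    proof
      assume a: "c2 \<le> t \<and> t < c3"
      then have "pi \<le> \<Theta> t \<and> \<not> pi < \<Theta> t" using c2(2)[rule_format, of t] c3(2)[rule_format, of t] tn by simp
      then have "\<Theta> t = pi" by simp
      then have "v t \<in> \<real> \<and> Re (v t) < 0" using Arg2pi_eq_pi T by simp
      then show "Im (v t) = 0 \<and> Re (v t) < 0" by (simp add: complex_is_Real_iff)
    qed
    have A4: "c3 \<le> t \<longrightarrow> Im (v t) < 0 \<and> pi < \<Theta> t \<and> \<Theta> t < 2 * pi"
    proof
      assume a: "c3 \<le> t"
      then have "pi < \<Theta> t" using c3(2)[rule_format, of t] tn by simp
      then show "Im (v t) < 0 \<and> pi < \<Theta> t \<and> \<Theta> t < 2 * pi" using Arg2pi_le_pi[of "v t"] T lt2 by auto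
    qed
    show ?thesis using A1 A2 A3 A4 by blast
  qed
  show ?thesis using c12 c23 c3 main by blast
qed

lemma dyn:
  fixes x \<alpha> \<beta> \<Theta> :: "nat \<Rightarrow> real"
  assumes apos: "\<forall>t<n. \<alpha> t > 0" and nz: "\<forall>t<n. Complex (\<beta> t) (1 - \<alpha> t) \<noteq> 0"
    and th: "\<forall>t<n. \<Theta> t = Arg2pi (Complex (\<beta> t) (1 - \<alpha> t))"
    and srt: "\<forall>t t'. t \<le> t' \<and> t' < n \<longrightarrow> \<Theta> t \<le> \<Theta> t'"
    and step: "\<forall>t<n. x (Suc t) = \<alpha> t * x t + \<beta> t"
  shows "\<exists>s1 s2 s3 s4. s1 \<le> s2 \<and> s2 \<le> s3 \<and> s3 \<le> s4 \<and> s4 \<le> n \<and>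
    (\<forall>t<n. (t < s1 \<longrightarrow> x t < x (Suc t)) \<and> (s1 \<le> t \<and> t < s2 \<longrightarrow> x (Suc t) = x t \<and> \<alpha> t < 1)
       \<and> (s2 \<le> t \<and> t < s3 \<longrightarrow> x (Suc t) < x t) \<and> (s3 \<le> t \<and> t < s4 \<longrightarrow> x (Suc t) = x t \<and> \<alpha> t > 1)
       \<and> (s4 \<le> t \<longrightarrow> x t < x (Suc t)))"
proof -
  define v where "v t = Complex (\<beta> t) (1 - \<alpha> t)" for t
  obtain c1 c2 c3 where cc: "c1 \<le> c2" "c2 \<le> c3" "c3 \<le> n" and
    cl: "\<forall>t<n. (t < c1 \<longrightarrow> Im (v t) = 0 \<and> Re (v t) > 0) \<and>
           (c1 \<le> t \<and> t < c2 \<longrightarrow> Im (v t) > 0 \<and> 0 < \<Theta> t \<and> \<Theta> t < pi) \<and>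
           (c2 \<le> t \<and> t < c3 \<longrightarrow> Im (v t) = 0 \<and> Re (v t) < 0) \<and>
           (c3 \<le> t \<longrightarrow> Im (v t) < 0 \<and> pi < \<Theta> t \<and> \<Theta> t < 2 * pi)"
    using classes[of n v \<Theta>] nz th srt unfolding v_def by blast
  have cl0: "\<alpha> t = 1 \<and> \<beta> t > 0" if "t < n" "t < c1" for t using cl that unfolding v_def by auto
  have cl1: "\<alpha> t < 1 \<and> 0 < \<Theta> t \<and> \<Theta> t < pi" if "t < n" "c1 \<le> t" "t < c2" for t
    using cl that unfolding v_def by auto
  have cl2: "\<alpha> t = 1 \<and> \<beta> t < 0" if "t < n" "c2 \<le> t" "t < c3" for t using cl that unfolding v_def by auto
  have cl3: "\<alpha> t > 1 \<and> pi < \<Theta> t \<and> \<Theta> t < 2 * pi" if "t < n" "c3 \<le> t" for t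
    using cl that unfolding v_def by auto
  define q where "q t = \<beta> t / (1 - \<alpha> t)" for t
  have dif: "x (Suc t) - x t = (1 - \<alpha> t) * (q t - x t)" if "t < n" "\<alpha> t \<noteq> 1" for t
    using step that unfolding q_def by (simp add: field_simps)
  have clo: "x (Suc t) - q t = \<alpha> t * (x t - q t)" if "t < n" "\<alpha> t \<noteq> 1" for t
    using step that unfolding q_def by (simp add: field_simps)
  have qmono: "q (Suc t) \<le> q t" if "Suc t < n" "\<alpha> t \<noteq> 1" "\<alpha> (Suc t) \<noteq> 1"
      "(1 - \<alpha> t) * (1 - \<alpha> (Suc t)) > 0"
      "\<Theta> t \<le> \<Theta> (Suc t)" "\<Theta> (Suc t) < \<Theta> t + pi" for t
  proof -
    have "0 \<le> Re (v t) * Im (v (Suc t)) - Im (v t) * Re (v (Suc t))"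
      using cross_nonneg[of "v t" "v (Suc t)"] that th unfolding v_def by simp
    then have cr: "0 \<le> \<beta> t * (1 - \<alpha> (Suc t)) - (1 - \<alpha> t) * \<beta> (Suc t)" unfolding v_def by simp
    have "q t - q (Suc t) = (\<beta> t * (1 - \<alpha> (Suc t)) - (1 - \<alpha> t) * \<beta> (Suc t)) / ((1 - \<alpha> t) * (1 - \<alpha> (Suc t)))"
      unfolding q_def using that by (simp add: field_simps)
    also have "\<dots> \<ge> 0" using cr that by simp
    finally show ?thesis by simp
  qed
  have closure: "q (Suc t) \<le> x (Suc t)" "q t < x t \<Longrightarrow> q (Suc t) < x (Suc t)"
    if "Suc t < n" "q t \<le> x t" "\<alpha> t \<noteq> 1" "q (Suc t) \<le> q t" for t
  proof -
    have ap: "\<alpha> t > 0" using apos that(1) by (meson Suc_lessD)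
    have tn: "t < n" using that(1) by simp
    have "0 \<le> \<alpha> t * (x t - q t)" using ap that by simp
    then show "q (Suc t) \<le> x (Suc t)" using clo[OF tn] that by simp
    show "q t < x t \<Longrightarrow> q (Suc t) < x (Suc t)"
    proof -
      assume "q t < x t"
      then have "0 < \<alpha> t * (x t - q t)" using ap by simp
      then show ?thesis using clo[OF tn] that by simp
    qed
  qed
  have qm1: "q (Suc t) \<le> q t" if "c1 \<le> t" "Suc t < c2" for t
  proof -
    have a: "\<alpha> t < 1 \<and> 0 < \<Theta> t \<and> \<Theta> t < pi" using cl1[of t] that cc by simp
    have b: "\<alpha> (Suc t) < 1 \<and> 0 < \<Theta> (Suc t) \<and> \<Theta> (Suc t) < pi" using cl1[of "Suc t"] that cc by simp
    have "\<Theta> t \<le> \<Theta> (Suc t)" using srt that cc by simp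
    then show ?thesis using a b that cc by (intro qmono) auto
  qed
  have qm3: "q (Suc t) \<le> q t" if "c3 \<le> t" "Suc t < n" for t
  proof -
    have a: "\<alpha> t > 1 \<and> pi < \<Theta> t \<and> \<Theta> t < 2 * pi" using cl3[of t] that cc by simp
    have b: "\<alpha> (Suc t) > 1 \<and> pi < \<Theta> (Suc t) \<and> \<Theta> (Suc t) < 2 * pi" using cl3[of "Suc t"] that cc by simp
    have "\<Theta> t \<le> \<Theta> (Suc t)" using srt that cc by simp
    moreover have "(1 - \<alpha> t) * (1 - \<alpha> (Suc t)) > 0" using a b by (simp add: mult_neg_neg)
    ultimately show ?thesis using a b that cc by (intro qmono) auto
  qed
  obtain s1 where s1: "c1 \<le> s1" "s1 \<le> c2" "\<forall>t. c1 \<le> t \<and> t < c2 \<longrightarrow> (q t \<le> x t \<longleftrightarrow> s1 \<le> t)"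
  proof -
    have "\<forall>t. c1 \<le> t \<and> Suc t < c2 \<and> q t \<le> x t \<longrightarrow> q (Suc t) \<le> x (Suc t)"
    proof (intro allI impI)
      fix t assume h: "c1 \<le> t \<and> Suc t < c2 \<and> q t \<le> x t"
      have tn: "Suc t < n" using h cc by simp
      have a: "\<alpha> t \<noteq> 1" using cl1[of t] h cc by simp
      show "q (Suc t) \<le> x (Suc t)" using closure(1)[OF tn _ a qm1] h by simp
    qed
    then show ?thesis using threshold[of c1 c2 "\<lambda>t. q t \<le> x t"] cc that by blast
  qed
  obtain s2 where s2: "c1 \<le> s2" "s2 \<le> c2" "\<forall>t. c1 \<le> t \<and> t < c2 \<longrightarrow> (q t < x t \<longleftrightarrow> s2 \<le> t)"
  proof -
    have "\<forall>t. c1 \<le> t \<and> Suc t < c2 \<and> q t < x t \<longrightarrow> q (Suc t) < x (Suc t)"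
    proof (intro allI impI)
      fix t assume h: "c1 \<le> t \<and> Suc t < c2 \<and> q t < x t"
      have tn: "Suc t < n" using h cc by simp
      have a: "\<alpha> t \<noteq> 1" using cl1[of t] h cc by simp
      show "q (Suc t) < x (Suc t)" using closure(2)[OF tn _ a qm1] h by simp
    qed
    then show ?thesis using threshold[of c1 c2 "\<lambda>t. q t < x t"] cc that by blast
  qed
  obtain s3 where s3: "c3 \<le> s3" "s3 \<le> n" "\<forall>t. c3 \<le> t \<and> t < n \<longrightarrow> (q t \<le> x t \<longleftrightarrow> s3 \<le> t)"
  proof -
    have "\<forall>t. c3 \<le> t \<and> Suc t < n \<and> q t \<le> x t \<longrightarrow> q (Suc t) \<le> x (Suc t)"
    proof (intro allI impI)
      fix t assume h: "c3 \<le> t \<and> Suc t < n \<and> q t \<le> x t"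
      have tn: "Suc t < n" using h by simp
      have a: "\<alpha> t \<noteq> 1" using cl3[of t] h by simp
      show "q (Suc t) \<le> x (Suc t)" using closure(1)[OF tn _ a qm3] h by simp
    qed
    then show ?thesis using threshold[of c3 n "\<lambda>t. q t \<le> x t"] cc that by blast
  qed
  obtain s4 where s4: "c3 \<le> s4" "s4 \<le> n" "\<forall>t. c3 \<le> t \<and> t < n \<longrightarrow> (q t < x t \<longleftrightarrow> s4 \<le> t)"
  proof -
    have "\<forall>t. c3 \<le> t \<and> Suc t < n \<and> q t < x t \<longrightarrow> q (Suc t) < x (Suc t)"
    proof (intro allI impI)
      fix t assume h: "c3 \<le> t \<and> Suc t < n \<and> q t < x t"
      have tn: "Suc t < n" using h by simp
      have a: "\<alpha> t \<noteq> 1" using cl3[of t] h by simp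
      show "q (Suc t) < x (Suc t)" using closure(2)[OF tn _ a qm3] h by simp
    qed
    then show ?thesis using threshold[of c3 n "\<lambda>t. q t < x t"] cc that by blast
  qed
  have s12: "s1 \<le> s2"
  proof (cases "s2 < c2")
    case True
    then have "q s2 < x s2" using s2 by simp
    then have "q s2 \<le> x s2" by simp
    then show ?thesis using s1 s2 True by simp
  qed (use s1 s2 in simp)
  have s34: "s3 \<le> s4"
  proof (cases "s4 < n")
    case True
    then have "q s4 < x s4" using s4 by simp
    then have "q s4 \<le> x s4" by simp
    then show ?thesis using s3 s4 True by simp
  qed (use s3 s4 in simp)
  show ?thesis
  proof (rule exI[of _ s1], rule exI[of _ s2], rule exI[of _ s3], rule exI[of _ s4], intro conjI allI impI)
    show "s1 \<le> s2" by (fact s12)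
    show "s2 \<le> s3" using s2 s3 cc by simp
    show "s3 \<le> s4" by (fact s34)
    show "s4 \<le> n" by (fact s4(2))
  next
    fix t assume tn: "t < n" and t: "t < s1"
    show "x t < x (Suc t)"
    proof (cases "t < c1")
      case True then show ?thesis using cl0[OF tn] step tn by simp
    next
      case False
      then have c: "c1 \<le> t" "t < c2" using t s1 by auto
      then have "x t < q t" using s1(3) t by force
      moreover have "\<alpha> t < 1" using cl1[OF tn c] by simp
      ultimately have "x (Suc t) - x t > 0" using dif[OF tn] by simp
      then show ?thesis by simp
    qed
  next
    fix t assume tn: "t < n" and t: "s1 \<le> t \<and> t < s2"
    then have c: "c1 \<le> t" "t < c2" using s1 s2 by auto
    have a: "\<alpha> t < 1" using cl1[OF tn c] by simp
    have "x t = q t" using s1(3) s2(3) t c by force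
    then have "x (Suc t) = x t" using dif[OF tn] a by simp
    then show "x (Suc t) = x t" by simp
  next
    fix t assume tn: "t < n" and t: "s1 \<le> t \<and> t < s2"
    then have c: "c1 \<le> t" "t < c2" using s1 s2 by auto
    show "\<alpha> t < 1" using cl1[OF tn c] by simp
  next
    fix t assume tn: "t < n" and t: "s2 \<le> t \<and> t < s3"
    show "x (Suc t) < x t"
    proof (cases "t < c2")
      case True
      then have c: "c1 \<le> t" "t < c2" using t s2 by auto
      have a: "\<alpha> t < 1" using cl1[OF tn c] by simp
      have "q t < x t" using s2(3) t c by force
      then have "x (Suc t) - x t < 0" using dif[OF tn] a by (simp add: mult_pos_neg)
      then show ?thesis by simp
    next
      case False
      show ?thesis
      proof (cases "t < c3")
        case True
        then show ?thesis using cl2[OF tn] False step tn by simp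
      next
        case False
        then have c: "c3 \<le> t" by simp
        have a: "\<alpha> t > 1" using cl3[OF tn c] by simp
        have "x t < q t" using s3(3) t c tn by force
        then have "x (Suc t) - x t < 0" using dif[OF tn] a by (simp add: mult_neg_pos)
        then show ?thesis by simp
      qed
    qed
  next
    fix t assume tn: "t < n" and t: "s3 \<le> t \<and> t < s4"
    then have c: "c3 \<le> t" using s3 by auto
    have a: "\<alpha> t > 1" using cl3[OF tn c] by simp
    have "x t = q t" using s3(3) s4(3) t c tn by force
    then have "x (Suc t) = x t" using dif[OF tn] a by simp
    then show "x (Suc t) = x t" by simp
  next
    fix t assume tn: "t < n" and t: "s3 \<le> t \<and> t < s4"
    then have c: "c3 \<le> t" using s3 by auto
    show "\<alpha> t > 1" using cl3[OF tn c] by simp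
  next
    fix t assume tn: "t < n" and t: "s4 \<le> t"
    then have c: "c3 \<le> t" using s4 by auto
    have a: "\<alpha> t > 1" using cl3[OF tn c] by simp
    have "q t < x t" using s4(3) t c tn by force
    then have "x (Suc t) - x t > 0" using dif[OF tn] a by (simp add: mult_neg_neg)
    then show "x t < x (Suc t)" by simp
  qed
qed

lemma dyn0:
  fixes x \<alpha> \<beta> \<Theta> :: "nat \<Rightarrow> real"
  assumes apos: "\<forall>t<n. \<alpha> t > 0" and nz: "\<forall>t<n. Complex (\<beta> t) (1 - \<alpha> t) \<noteq> 0"
    and th: "\<forall>t<n. \<Theta> t = Arg2pi (Complex (\<beta> t) (1 - \<alpha> t))"
    and srt: "\<forall>t t'. t \<le> t' \<and> t' < n \<longrightarrow> \<Theta> t \<le> \<Theta> t'"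
    and step: "\<forall>t<n. x (Suc t) = \<alpha> t * x t" and x0: "x 0 > 0"
  shows "\<exists>s1 s2 s3 s4. s1 \<le> s2 \<and> s2 \<le> s3 \<and> s3 \<le> s4 \<and> s4 \<le> n \<and>
    (\<forall>t<n. (t < s1 \<longrightarrow> x t < x (Suc t)) \<and> (s1 \<le> t \<and> t < s2 \<longrightarrow> x (Suc t) = x t \<and> \<alpha> t = 1 \<and> \<beta> t > 0)
       \<and> (s2 \<le> t \<and> t < s3 \<longrightarrow> x (Suc t) < x t) \<and> (s3 \<le> t \<and> t < s4 \<longrightarrow> x (Suc t) = x t \<and> \<alpha> t = 1 \<and> \<beta> t < 0)
       \<and> (s4 \<le> t \<longrightarrow> x t < x (Suc t)))"
proof -
  define v where "v t = Complex (\<beta> t) (1 - \<alpha> t)" for t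
  obtain c1 c2 c3 where cc: "c1 \<le> c2" "c2 \<le> c3" "c3 \<le> n" and
    cl: "\<forall>t<n. (t < c1 \<longrightarrow> Im (v t) = 0 \<and> Re (v t) > 0) \<and>
           (c1 \<le> t \<and> t < c2 \<longrightarrow> Im (v t) > 0 \<and> 0 < \<Theta> t \<and> \<Theta> t < pi) \<and>
           (c2 \<le> t \<and> t < c3 \<longrightarrow> Im (v t) = 0 \<and> Re (v t) < 0) \<and>
           (c3 \<le> t \<longrightarrow> Im (v t) < 0 \<and> pi < \<Theta> t \<and> \<Theta> t < 2 * pi)"
    using classes[of n v \<Theta>] nz th srt unfolding v_def by blast
  have cl0: "\<alpha> t = 1 \<and> \<beta> t > 0" if "t < n" "t < c1" for t using cl that unfolding v_def by auto
  have cl1: "\<alpha> t < 1" if "t < n" "c1 \<le> t" "t < c2" for t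
    using cl that unfolding v_def by auto
  have cl2: "\<alpha> t = 1 \<and> \<beta> t < 0" if "t < n" "c2 \<le> t" "t < c3" for t using cl that unfolding v_def by auto
  have cl3: "\<alpha> t > 1" if "t < n" "c3 \<le> t" for t
    using cl that unfolding v_def by auto
  have xpos: "t \<le> n \<Longrightarrow> x t > 0" for t
  proof (induction t)
    case (Suc t)
    then have "x t > 0" "\<alpha> t > 0" using apos by auto
    then show ?case using step Suc by simp
  qed (use x0 in simp)
  have P1: "x (Suc t) = x t \<and> \<alpha> t = 1 \<and> \<beta> t > 0" if "t < n" "t < c1" for t
    using cl0[OF that] step that by simp
  have P2: "x (Suc t) < x t" if "t < n" "c1 \<le> t" "t < c2" for t
    using cl1[OF that] step that xpos[of t] by simp
  have P3: "x (Suc t) = x t \<and> \<alpha> t = 1 \<and> \<beta> t < 0" if "t < n" "c2 \<le> t" "t < c3" for t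
    using cl2[OF that] step that by simp
  have P4: "x t < x (Suc t)" if "t < n" "c3 \<le> t" for t
    using cl3[OF that] step that xpos[of t] by simp
  show ?thesis
    apply (rule exI[of _ 0], rule exI[of _ c1], rule exI[of _ c2], rule exI[of _ c3])
    using cc P1 P2 P3 P4 by auto
qed


lemma core:
  fixes X \<alpha> \<beta> \<Theta> :: "nat \<Rightarrow> real" and c :: real
  assumes n: "n \<ge> 1" and per: "periodic X n" and apos: "\<forall>t. \<alpha> t > 0"
    and nz: "\<forall>t<n. Complex (\<beta> t) (1 - \<alpha> t) \<noteq> 0"
    and th: "\<forall>t<n. \<Theta> t = Arg2pi (Complex (\<beta> t) (1 - \<alpha> t))"
    and srt: "\<forall>t t'. t \<le> t' \<and> t' < n \<longrightarrow> \<Theta> t \<le> \<Theta> t'"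
    and step: "\<forall>t. X (Suc t) = \<alpha> t * X t + \<beta> t * c"
    and nid: "c = 0 \<Longrightarrow> X 0 \<noteq> 0"
  shows "PU X n \<and> PS X \<and> (\<forall>t<n. X (Suc t) = X t \<longrightarrow> (\<exists>lam. lam \<noteq> 0 \<and>
      Complex (X t) c = complex_of_real lam * Complex (\<beta> t) (1 - \<alpha> t) \<and>
      (lam > 0 \<longrightarrow> (\<forall>i. X i \<le> X t)) \<and> (lam < 0 \<longrightarrow> (\<forall>i. X t \<le> X i))))"
proof (cases "c = 0")
  case False
  define p where "p t = X t / c" for t
  have pstep: "\<forall>t<n. p (Suc t) = \<alpha> t * p t + \<beta> t"
    using step False unfolding p_def by (simp add: field_simps)
  obtain s1 s2 s3 s4 where s: "s1 \<le> s2" "s2 \<le> s3" "s3 \<le> s4" "s4 \<le> n" and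
    pat: "\<forall>t<n. (t < s1 \<longrightarrow> p t < p (Suc t)) \<and> (s1 \<le> t \<and> t < s2 \<longrightarrow> p (Suc t) = p t \<and> \<alpha> t < 1)
       \<and> (s2 \<le> t \<and> t < s3 \<longrightarrow> p (Suc t) < p t) \<and> (s3 \<le> t \<and> t < s4 \<longrightarrow> p (Suc t) = p t \<and> \<alpha> t > 1)
       \<and> (s4 \<le> t \<longrightarrow> p t < p (Suc t))"
    using dyn[of n \<alpha> \<beta> \<Theta> p] apos nz th srt pstep by blast
  define Y where "Y t = \<bar>c\<bar> * p t" for t
  have ac: "\<bar>c\<bar> > 0" using False by simp
  have Yper: "periodic Y n" using per unfolding periodic_def Y_def p_def by simp
  have Ylt: "Y a < Y b \<longleftrightarrow> p a < p b" for a b unfolding Y_def using ac by simp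
  have Yeq: "Y a = Y b \<longleftrightarrow> p a = p b" for a b unfolding Y_def using ac by simp
  have Ypat: "\<forall>t<n. (t < s1 \<longrightarrow> Y t < Y (Suc t)) \<and> (s1 \<le> t \<and> t < s2 \<longrightarrow> Y (Suc t) = Y t)
       \<and> (s2 \<le> t \<and> t < s3 \<longrightarrow> Y (Suc t) < Y t) \<and> (s3 \<le> t \<and> t < s4 \<longrightarrow> Y (Suc t) = Y t)
       \<and> (s4 \<le> t \<longrightarrow> Y t < Y (Suc t))"
    using pat unfolding Ylt Yeq by blast
  note U = lemU[OF Yper n s Ypat]
  have XY: "X t = (if c > 0 then Y t else - Y t)" for t
    unfolding Y_def p_def using False by auto
  have PUX: "PU X n"
  proof (cases "c > 0")
    case True
    then have "X = Y" using XY by auto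
    then show ?thesis using U(1) by simp
  next
    case False
    then have "X = (\<lambda>i. - Y i)" using XY by auto
    then show ?thesis using PU_neg[OF Yper U(1)] by simp
  qed
  have PSX: "PS X"
  proof (cases "c > 0")
    case True
    then have "X = Y" using XY by auto
    then show ?thesis using U(2) by simp
  next
    case False
    then have "X = (\<lambda>i. - Y i)" using XY by auto
    then show ?thesis using PS_neg[OF U(2)] by simp
  qed
  have Z: "\<exists>lam. lam \<noteq> 0 \<and>
      Complex (X t) c = complex_of_real lam * Complex (\<beta> t) (1 - \<alpha> t) \<and>
      (lam > 0 \<longrightarrow> (\<forall>i. X i \<le> X t)) \<and> (lam < 0 \<longrightarrow> (\<forall>i. X t \<le> X i))"
    if tn: "t < n" and z: "X (Suc t) = X t" for t
  proof -
    have pz: "p (Suc t) = p t" using z unfolding p_def by simp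
    have grp: "(s1 \<le> t \<and> t < s2 \<and> \<alpha> t < 1) \<or> (s3 \<le> t \<and> t < s4 \<and> \<alpha> t > 1)"
    proof -
      have P: "(t < s1 \<longrightarrow> p t < p (Suc t)) \<and> (s1 \<le> t \<and> t < s2 \<longrightarrow> p (Suc t) = p t \<and> \<alpha> t < 1)
       \<and> (s2 \<le> t \<and> t < s3 \<longrightarrow> p (Suc t) < p t) \<and> (s3 \<le> t \<and> t < s4 \<longrightarrow> p (Suc t) = p t \<and> \<alpha> t > 1)
       \<and> (s4 \<le> t \<longrightarrow> p t < p (Suc t))" using pat tn by blast
      consider "t < s1" | "s1 \<le> t \<and> t < s2" | "s2 \<le> t \<and> t < s3" | "s3 \<le> t \<and> t < s4" | "s4 \<le> t" by linarith
      then show ?thesis using P pz by cases auto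
    qed
    have bq: "\<beta> t = (1 - \<alpha> t) * p t" using pstep tn pz by (simp add: algebra_simps)
    have an: "\<alpha> t \<noteq> 1" using grp by auto
    define lam where "lam = c / (1 - \<alpha> t)"
    have cx: "Complex (X t) c = complex_of_real lam * Complex (\<beta> t) (1 - \<alpha> t)"
      unfolding lam_def bq using an False unfolding p_def by (simp add: complex_eq_iff field_simps)
    have l0: "lam \<noteq> 0" unfolding lam_def using an False by simp
    have mx: "\<forall>i. X i \<le> X t" if "lam > 0"
    proof (cases "\<alpha> t < 1")
      case True
      then have "c > 0" using that unfolding lam_def by (simp add: zero_less_divide_iff)
      moreover have "\<forall>i. Y i \<le> Y t" using U(3) grp True by auto
      ultimately show ?thesis using XY by simp
    next
      case False
      then have "c < 0" using that an unfolding lam_def by (simp add: zero_less_divide_iff)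
      moreover have "\<forall>i. Y t \<le> Y i" using U(4) grp False by auto
      ultimately show ?thesis using XY by simp
    qed
    have mn: "\<forall>i. X t \<le> X i" if "lam < 0"
    proof (cases "\<alpha> t < 1")
      case True
      then have "c < 0" using that unfolding lam_def by (simp add: divide_less_0_iff)
      moreover have "\<forall>i. Y i \<le> Y t" using U(3) grp True by auto
      ultimately show ?thesis using XY by simp
    next
      case False
      then have "c > 0" using that an unfolding lam_def by (simp add: divide_less_0_iff)
      moreover have "\<forall>i. Y t \<le> Y i" using U(4) grp False by auto
      ultimately show ?thesis using XY by simp
    qed
    show ?thesis using cx l0 mx mn by blast
  qed
  show ?thesis using PUX PSX Z by blast
next
  case True
  then have X0: "X 0 \<noteq> 0" using nid by blast
  define Y where "Y t = (if X 0 > 0 then X t else - X t)" for t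
  have Ystep: "\<forall>t. Y (Suc t) = \<alpha> t * Y t" using step True unfolding Y_def by simp
  have Y0: "Y 0 > 0" using X0 unfolding Y_def by simp
  have Ypos: "Y t > 0" for t
  proof (induction t)
    case (Suc t) then show ?case using Ystep apos by simp
  qed (use Y0 in simp)
  obtain s1 s2 s3 s4 where s: "s1 \<le> s2" "s2 \<le> s3" "s3 \<le> s4" "s4 \<le> n" and
    pat: "\<forall>t<n. (t < s1 \<longrightarrow> Y t < Y (Suc t)) \<and> (s1 \<le> t \<and> t < s2 \<longrightarrow> Y (Suc t) = Y t \<and> \<alpha> t = 1 \<and> \<beta> t > 0)
       \<and> (s2 \<le> t \<and> t < s3 \<longrightarrow> Y (Suc t) < Y t) \<and> (s3 \<le> t \<and> t < s4 \<longrightarrow> Y (Suc t) = Y t \<and> \<alpha> t = 1 \<and> \<beta> t < 0)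
       \<and> (s4 \<le> t \<longrightarrow> Y t < Y (Suc t))"
    using dyn0[of n \<alpha> \<beta> \<Theta> Y] apos nz th srt Ystep Y0 by blast
  have Yper: "periodic Y n" using per unfolding periodic_def Y_def by simp
  have Ypat: "\<forall>t<n. (t < s1 \<longrightarrow> Y t < Y (Suc t)) \<and> (s1 \<le> t \<and> t < s2 \<longrightarrow> Y (Suc t) = Y t)
       \<and> (s2 \<le> t \<and> t < s3 \<longrightarrow> Y (Suc t) < Y t) \<and> (s3 \<le> t \<and> t < s4 \<longrightarrow> Y (Suc t) = Y t)
       \<and> (s4 \<le> t \<longrightarrow> Y t < Y (Suc t))"
    using pat by blast
  note U = lemU[OF Yper n s Ypat]
  have XYp: "X = Y" if "X 0 > 0" using that unfolding Y_def by (intro ext) simp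
  have XYn: "X = (\<lambda>i. - Y i)" if "\<not> X 0 > 0" using that unfolding Y_def by (intro ext) simp
  have PUX: "PU X n"
  proof (cases "X 0 > 0")
    case True
    then have "X = Y" by (rule XYp)
    then show ?thesis using U(1) by simp
  next
    case False
    then have "X = (\<lambda>i. - Y i)" by (rule XYn)
    then show ?thesis using PU_neg[OF Yper U(1)] by simp
  qed
  have PSX: "PS X"
  proof (cases "X 0 > 0")
    case True
    then have "X = Y" by (rule XYp)
    then show ?thesis using U(2) by simp
  next
    case False
    then have "X = (\<lambda>i. - Y i)" by (rule XYn)
    then show ?thesis using PS_neg[OF U(2)] by simp
  qed
  have Z: "\<exists>lam. lam \<noteq> 0 \<and>
      Complex (X t) c = complex_of_real lam * Complex (\<beta> t) (1 - \<alpha> t) \<and>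
      (lam > 0 \<longrightarrow> (\<forall>i. X i \<le> X t)) \<and> (lam < 0 \<longrightarrow> (\<forall>i. X t \<le> X i))"
    if tn: "t < n" and z: "X (Suc t) = X t" for t
  proof -
    have yz: "Y (Suc t) = Y t" using z unfolding Y_def by simp
    have grp: "(s1 \<le> t \<and> t < s2 \<and> \<alpha> t = 1 \<and> \<beta> t > 0) \<or> (s3 \<le> t \<and> t < s4 \<and> \<alpha> t = 1 \<and> \<beta> t < 0)"
    proof -
      have P: "(t < s1 \<longrightarrow> Y t < Y (Suc t)) \<and> (s1 \<le> t \<and> t < s2 \<longrightarrow> Y (Suc t) = Y t \<and> \<alpha> t = 1 \<and> \<beta> t > 0)
       \<and> (s2 \<le> t \<and> t < s3 \<longrightarrow> Y (Suc t) < Y t) \<and> (s3 \<le> t \<and> t < s4 \<longrightarrow> Y (Suc t) = Y t \<and> \<alpha> t = 1 \<and> \<beta> t < 0)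
       \<and> (s4 \<le> t \<longrightarrow> Y t < Y (Suc t))" using pat tn by blast
      consider "t < s1" | "s1 \<le> t \<and> t < s2" | "s2 \<le> t \<and> t < s3" | "s3 \<le> t \<and> t < s4" | "s4 \<le> t" by linarith
      then show ?thesis using P yz by cases auto
    qed
    have bn: "\<beta> t \<noteq> 0" using grp by auto
    have a1: "\<alpha> t = 1" using grp by auto
    define lam where "lam = X t / \<beta> t"
    have cx: "Complex (X t) c = complex_of_real lam * Complex (\<beta> t) (1 - \<alpha> t)"
      unfolding lam_def using bn a1 True by (simp add: complex_eq_iff)
    have Yt: "Y t > 0" by (rule Ypos)
    have XYt: "X t = (if X 0 > 0 then Y t else - Y t)" using XYp XYn by auto
    have Xt: "X t \<noteq> 0" using XYt Yt by (auto split: if_splits)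
    have l0: "lam \<noteq> 0" unfolding lam_def using bn Xt by simp
    have mx: "\<forall>i. X i \<le> X t" if "lam > 0"
    proof (cases "\<beta> t > 0")
      case True
      then have "X t > 0" using that unfolding lam_def by (simp add: zero_less_divide_iff)
      then have "X 0 > 0" using XYt Yt by (auto split: if_splits)
      moreover have "\<forall>i. Y i \<le> Y t" using U(3) grp True by auto
      ultimately show ?thesis using XYp XYn by auto
    next
      case False
      then have "\<beta> t < 0" using bn by simp
      then have "X t < 0" using that unfolding lam_def by (simp add: zero_less_divide_iff)
      then have "\<not> X 0 > 0" using XYt Yt by (auto split: if_splits)
      moreover have "\<forall>i. Y t \<le> Y i" using U(4) grp False by auto
      ultimately show ?thesis using XYp XYn by auto
    qed
    have mn: "\<forall>i. X t \<le> X i" if "lam < 0"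
    proof (cases "\<beta> t > 0")
      case True
      then have "X t < 0" using that unfolding lam_def by (simp add: divide_less_0_iff)
      then have "\<not> X 0 > 0" using XYt Yt by (auto split: if_splits)
      moreover have "\<forall>i. Y i \<le> Y t" using U(3) grp True by auto
      ultimately show ?thesis using XYp XYn by auto
    next
      case False
      then have "\<beta> t < 0" using bn by simp
      then have "X t > 0" using that unfolding lam_def by (simp add: divide_less_0_iff)
      then have "X 0 > 0" using XYt Yt by (auto split: if_splits)
      moreover have "\<forall>i. Y t \<le> Y i" using U(4) grp False by auto
      ultimately show ?thesis using XYp XYn by auto
    qed
    show ?thesis using cx l0 mx mn by blast
  qed
  show ?thesis using PUX PSX Z by blast
qed


lemma su_transfer:
  fixes F :: "nat \<Rightarrow> 'a" and B :: "nat \<Rightarrow> real"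
  assumes le: "\<And>i j. i < n \<Longrightarrow> j < n \<Longrightarrow> (le (F i) (F j) \<longleftrightarrow> B i \<le> B j)"
    and eq: "\<And>i j. i < n \<Longrightarrow> j < n \<Longrightarrow> (F i = F j \<longleftrightarrow> B i = B j)"
    and n: "n \<ge> 1" and su: "cyc_strictly_unimodal (\<le>) n B"
  shows "cyc_strictly_unimodal le n F"
proof -
  have m: "a mod n < n" for a using n by simp
  obtain k l where kl: "k < n" "l < n"
    and inc: "\<forall>j<(l + n - k) mod n. B ((k + j) mod n) \<le> B ((k + j + 1) mod n)"
    and dec: "\<forall>j. (l + n - k) mod n \<le> j \<and> j < n \<longrightarrow> B ((k + j + 1) mod n) \<le> B ((k + j) mod n)"
    using su unfolding cyc_strictly_unimodal_def cyc_unimodal_def Let_def by blast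
  have st: "\<forall>j<n. B j = B ((j + 1) mod n) \<longrightarrow> ((\<forall>i<n. B j \<le> B i) \<or> (\<forall>i<n. B i \<le> B j))"
    using su unfolding cyc_strictly_unimodal_def by blast
  have U: "cyc_unimodal le n F"
    unfolding cyc_unimodal_def Let_def
  proof (rule exI[of _ k], rule exI[of _ l], intro conjI allI impI)
    fix j assume "j < (l + n - k) mod n"
    then show "le (F ((k + j) mod n)) (F ((k + j + 1) mod n))" using inc le[OF m m] by simp
  next
    fix j assume "(l + n - k) mod n \<le> j \<and> j < n"
    then show "le (F ((k + j + 1) mod n)) (F ((k + j) mod n))" using dec le[OF m m] by simp
  qed (use kl in auto)
  have S: "\<forall>j<n. F j = F ((j + 1) mod n) \<longrightarrow> ((\<forall>i<n. le (F j) (F i)) \<or> (\<forall>i<n. le (F i) (F j)))"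
  proof (intro allI impI)
    fix j assume j: "j < n" "F j = F ((j + 1) mod n)"
    then have "B j = B ((j + 1) mod n)" using eq[OF _ m] by simp
    then have "(\<forall>i<n. B j \<le> B i) \<or> (\<forall>i<n. B i \<le> B j)" using st j by simp
    then show "(\<forall>i<n. le (F j) (F i)) \<or> (\<forall>i<n. le (F i) (F j))"
    proof
      assume "\<forall>i<n. B j \<le> B i"
      then have "\<forall>i<n. le (F j) (F i)" using le[OF j(1)] by blast
      then show ?thesis by blast
    next
      assume "\<forall>i<n. B i \<le> B j"
      then have "\<forall>i<n. le (F i) (F j)" using le[OF _ j(1)] by blast
      then show ?thesis by blast
    qed
  qed
  show ?thesis unfolding cyc_strictly_unimodal_def using U S by blast
qed


theorem mainTheorem13:
  fixes f :: "nat \<Rightarrow> real \<times> real" and n :: nat and \<tau> :: "nat \<Rightarrow> nat"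
  assumes n_pos: "n \<ge> 1"
    and mono: "\<forall>i\<in>{1..n}. monotone_lin (f i)"
    and nonid: "\<forall>i\<in>{1..n}. \<not> identical_lin (f i)"
    and perm: "\<tau> permutes {1..n}"
    and ccw: "counterclockwise f n \<tau>"
  shows "cyc_strictly_unimodal lin_le n (\<lambda>k. comp_seq f (shift \<tau> n k) n)
   \<and> (\<not> colinear f n \<and> \<not> potentially_identical f n \<longrightarrow>
      (\<forall>k<n. comp_seq f (shift \<tau> n k) n = comp_seq f (shift \<tau> n ((k + 1) mod n)) n \<longrightarrow>
        (let F = (\<lambda>i. comp_seq f (shift \<tau> n i) n);
             A = ((\<forall>i<n. lin_le (F k) (F i)) \<and>
                  cong2pi (map_option (\<lambda>t. t + pi) (theta (f (\<tau> (k + 1))))) (theta (F k)));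
             B = ((\<forall>i<n. lin_le (F i) (F k)) \<and>
                  cong2pi (theta (f (\<tau> (k + 1)))) (theta (F k)))
         in (A \<and> \<not> B) \<or> (\<not> A \<and> B))))"
proof -
  have inS: "\<tau> i \<in> {1..n}" if "i \<in> {1..n}" for i
    using permutes_in_image[OF perm] that by blast
  have fpos: "fst (f (\<tau> i)) > 0" if "i \<in> {1..n}" for i
    using mono inS[OF that] unfolding monotone_lin_def by blast
  have fnid: "f (\<tau> i) \<noteq> (1, 0)" if "i \<in> {1..n}" for i
    using nonid inS[OF that] unfolding identical_lin_def by blast
  define Fk where "Fk k = comp_seq f (shift \<tau> n k) n" for k
  define P where "P = fst (Fk 0)"
  define c where "c = 1 - P"
  define h where "h i = f (\<tau> (i mod n + 1))" for i
  have hin: "i mod n + 1 \<in> {1..n}" for i using n_pos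
    by (simp add: Suc_leI)
  have hpos: "fst (h i) > 0" for i unfolding h_def using fpos[OF hin] .
  have hnid: "h i \<noteq> (1, 0)" for i unfolding h_def using fnid[OF hin] .
  have step_eq: "lcomp (Fk (Suc k)) (f (\<tau> (Suc k))) = lcomp (f (\<tau> (Suc k))) (Fk k)" if "k < n" for k
    unfolding Fk_def using F_step[OF that] .
  have Fslope: "k \<le> n \<Longrightarrow> fst (Fk k) = P" for k
  proof (induction k)
    case 0 then show ?case unfolding P_def by simp
  next
    case (Suc k)
    have kn: "k < n" using Suc by simp
    have g: "fst (f (\<tau> (Suc k))) > 0" using fpos[of "Suc k"] kn by simp
    have "fst (Fk (Suc k)) * fst (f (\<tau> (Suc k))) = fst (f (\<tau> (Suc k))) * fst (Fk k)"
      using arg_cong[OF step_eq[OF kn], of fst] unfolding lcomp_def by simp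
    then have "fst (Fk (Suc k)) = fst (Fk k)" using g by simp
    then show ?case using Suc by simp
  qed
  have Frec: "snd (Fk (Suc k)) = fst (f (\<tau> (Suc k))) * snd (Fk k) + snd (f (\<tau> (Suc k))) * c"
    if kn: "k < n" for k
  proof -
    have "fst (Fk (Suc k)) * snd (f (\<tau> (Suc k))) + snd (Fk (Suc k))
        = fst (f (\<tau> (Suc k))) * snd (Fk k) + snd (f (\<tau> (Suc k)))"
      using arg_cong[OF step_eq[OF kn], of snd] unfolding lcomp_def by simp
    moreover have "fst (Fk (Suc k)) = P" using Fslope[of "Suc k"] kn by simp
    ultimately show ?thesis unfolding c_def by (simp add: algebra_simps)
  qed
  have FkN: "Fk n = Fk 0" unfolding Fk_def using F_n F_0 by metis
  define B where "B i = snd (Fk (i mod n))" for i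
  have Brec: "B (Suc i) = fst (h i) * B i + snd (h i) * c" for i
  proof -
    define k where "k = i mod n"
    have kn: "k < n" unfolding k_def using n_pos by simp
    have hk: "h i = f (\<tau> (Suc k))" unfolding h_def k_def by simp
    have "B (Suc i) = snd (Fk (Suc k))"
    proof (cases "Suc k = n")
      case True
      then have "Suc i mod n = 0" unfolding k_def by (simp add: mod_Suc)
      then show ?thesis unfolding B_def using True FkN by simp
    next
      case False
      then have "Suc i mod n = Suc k" unfolding k_def by (simp add: mod_Suc)
      then show ?thesis unfolding B_def by simp
    qed
    also have "\<dots> = fst (h i) * B i + snd (h i) * c"
      using Frec[OF kn] hk unfolding B_def k_def by simp
    finally show ?thesis .
  qed
  have Bper: "periodic B n" unfolding periodic_def B_def by simp
  have FkB: "Fk k = (P, B k)" if "k < n" for k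
    using Fslope[of k] that unfolding B_def by (simp add: prod_eq_iff)
  define \<Theta> where "\<Theta> i = Arg2pi (Complex (snd (h i)) (1 - fst (h i)))" for i
  have vnz: "Complex (snd (h i)) (1 - fst (h i)) \<noteq> 0" for i
    using hnid[of i] by (auto simp: complex_eq_iff prod_eq_iff)
  have theta_h: "theta (h i) = Some (\<Theta> i)" for i
  proof -
    have "vecf (h i) \<noteq> (0, 0)" using hnid[of i] unfolding vecf_def by (auto simp: prod_eq_iff)
    then show ?thesis unfolding theta_def \<Theta>_def vecf_def by simp
  qed
  obtain k0 where k0: "sorted (rotate k0 (map (\<lambda>i. the (theta (f (\<tau> i))))
                           (filter (\<lambda>i. \<not> identical_lin (f (\<tau> i))) [1..<n+1])))"
    using ccw unfolding counterclockwise_def by blast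
  define L where "L = map (\<lambda>i. the (theta (f (\<tau> i)))) [1..<n+1]"
  have filt: "filter (\<lambda>i. \<not> identical_lin (f (\<tau> i))) [1..<n+1] = [1..<n+1]"
    using fnid unfolding identical_lin_def by (intro filter_True) auto
  have sL: "sorted (rotate k0 L)" using k0 filt unfolding L_def by simp
  have lenL: "length L = n" unfolding L_def by simp
  define r where "r = k0 mod n"
  have rn: "r < n" unfolding r_def using n_pos by simp
  have rotL: "rotate k0 L ! t = \<Theta> (r + t)" if "t < n" for t
  proof -
    have "rotate k0 L ! t = L ! ((k0 + t) mod n)" using nth_rotate[of t L k0] that lenL by simp
    also have "\<dots> = the (theta (f (\<tau> (1 + (k0 + t) mod n))))"
    proof -
      have jn: "(k0 + t) mod n < n" using n_pos by simp
      then show ?thesis unfolding L_def by (simp del: upt_Suc)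
    qed
    also have "(k0 + t) mod n = (r + t) mod n" unfolding r_def by (simp add: mod_add_left_eq)
    also have "the (theta (f (\<tau> (1 + (r + t) mod n)))) = \<Theta> (r + t)"
      using theta_h[of "r + t"] unfolding h_def by simp
    finally show ?thesis .
  qed
  have srt: "\<forall>t t'. t \<le> t' \<and> t' < n \<longrightarrow> \<Theta> (r + t) \<le> \<Theta> (r + t')"
  proof (intro allI impI)
    fix t t' assume tt: "t \<le> t' \<and> t' < n"
    have "rotate k0 L ! t \<le> rotate k0 L ! t'"
      using sorted_nth_mono[OF sL] tt lenL by simp
    then show "\<Theta> (r + t) \<le> \<Theta> (r + t')" using rotL tt by simp
  qed
  define \<alpha> where "\<alpha> t = fst (h (r + t))" for t
  define \<beta> where "\<beta> t = snd (h (r + t))" for t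
  define \<Theta>o where "\<Theta>o t = \<Theta> (r + t)" for t
  define X where "X t = B (r + t)" for t
  have Xper: "periodic X n" unfolding periodic_def X_def
  proof
    fix i show "B (r + (i + n)) = B (r + i)" using Bper[unfolded periodic_def, rule_format, of "r + i"] by (simp add: add.assoc)
  qed
  have Xstep: "\<forall>t. X (Suc t) = \<alpha> t * X t + \<beta> t * c"
    unfolding X_def \<alpha>_def \<beta>_def using Brec by simp
  have BX: "B i = X (i + n - r)" for i
  proof -
    have "X (i + n - r) = B (i + n)" unfolding X_def using rn by simp
    also have "\<dots> = B i" using Bper unfolding periodic_def by simp
    finally show ?thesis by simp
  qed
  have apos: "\<forall>t. \<alpha> t > 0" unfolding \<alpha>_def using hpos by simp
  have nz: "\<forall>t<n. Complex (\<beta> t) (1 - \<alpha> t) \<noteq> 0" unfolding \<alpha>_def \<beta>_def using vnz by simp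
  have th: "\<forall>t<n. \<Theta>o t = Arg2pi (Complex (\<beta> t) (1 - \<alpha> t))"
    unfolding \<Theta>o_def \<alpha>_def \<beta>_def \<Theta>_def by simp
  have srt': "\<forall>t t'. t \<le> t' \<and> t' < n \<longrightarrow> \<Theta>o t \<le> \<Theta>o t'" using srt unfolding \<Theta>o_def .
  have le_tr: "lin_le (Fk i) (Fk j) \<longleftrightarrow> B i \<le> B j" if "i < n" "j < n" for i j
    using FkB[OF that(1)] FkB[OF that(2)] unfolding lin_le_def lapp_def by auto
  have eq_tr: "Fk i = Fk j \<longleftrightarrow> B i = B j" if "i < n" "j < n" for i j
    using FkB[OF that(1)] FkB[OF that(2)] by auto
  have Fid: "comp_seq f \<tau> n = Fk 0" unfolding Fk_def using F_0 by metis
  show ?thesis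
  proof (cases "c = 0 \<and> X 0 = 0")
    case True
    have X0: "X t = 0" for t
    proof (induction t)
      case (Suc t) then show ?case using Xstep True by simp
    qed (use True in simp)
    have B0: "B i = 0" for i using BX X0 by simp
    have PUB: "PU B n" unfolding PU_def using n_pos B0 by (intro exI[of _ 0]) auto
    have PSB: "PS B" unfolding PS_def using B0 by simp
    have part1: "cyc_strictly_unimodal lin_le n Fk"
      by (rule su_transfer[OF le_tr eq_tr n_pos cyc_su[OF Bper n_pos PUB PSB]])
    have potid: "potentially_identical f n"
    proof -
      have "P = 1" using True unfolding c_def by simp
      then have "Fk 0 = (1, 0)" using FkB[of 0] n_pos B0 by simp
      then have "comp_seq f \<tau> n = (1, 0)" using Fid by simp
      then show ?thesis unfolding potentially_identical_def using perm ccw by blast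
    qed
    show ?thesis using part1 potid unfolding Fk_def by blast
  next
    case False
    then have nid: "c = 0 \<Longrightarrow> X 0 \<noteq> 0" by blast
    have C: "PU X n \<and> PS X \<and> (\<forall>t<n. X (Suc t) = X t \<longrightarrow> (\<exists>lam. lam \<noteq> 0 \<and>
      Complex (X t) c = complex_of_real lam * Complex (\<beta> t) (1 - \<alpha> t) \<and>
      (lam > 0 \<longrightarrow> (\<forall>i. X i \<le> X t)) \<and> (lam < 0 \<longrightarrow> (\<forall>i. X t \<le> X i))))"
      by (rule core[OF n_pos Xper apos nz th srt' Xstep nid])
    have PUB: "PU B n" using PU_shift[of B r n] C unfolding X_def by simp
    have PSB: "PS B" using PS_shift[of B r n] C Bper rn unfolding X_def by simp
    have part1: "cyc_strictly_unimodal lin_le n Fk"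
      by (rule su_transfer[OF le_tr eq_tr n_pos cyc_su[OF Bper n_pos PUB PSB]])
    have part2: "let F = Fk;
             A = ((\<forall>i<n. lin_le (F k) (F i)) \<and>
                  cong2pi (map_option (\<lambda>t. t + pi) (theta (f (\<tau> (k + 1))))) (theta (F k)));
             Bc = ((\<forall>i<n. lin_le (F i) (F k)) \<and>
                  cong2pi (theta (f (\<tau> (k + 1)))) (theta (F k)))
         in (A \<and> \<not> Bc) \<or> (\<not> A \<and> Bc)"
      if kn: "k < n" and eqk: "Fk k = Fk ((k + 1) mod n)" for k
    proof -
      define t where "t = (k + n - r) mod n"
      have tn: "t < n" unfolding t_def using n_pos by simp
      have rt: "r + t = k \<or> r + t = k + n"
      proof (cases "r \<le> k")
        case True
        then have e: "k + n - r = (k - r) + n" by simp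
        have "t = k - r" unfolding t_def e using kn by simp
        then show ?thesis using True by simp
      next
        case False
        then have "t = k + n - r" unfolding t_def using kn rn by simp
        then show ?thesis using False rn by simp
      qed
      have Bn: "B (a + n) = B a" for a using Bper unfolding periodic_def by blast
      have Xt: "X t = B k" and XSt: "X (Suc t) = B (Suc k)"
      proof -
        show "X t = B k" using rt Bn[of k] unfolding X_def by auto
        show "X (Suc t) = B (Suc k)" using rt Bn[of "Suc k"] unfolding X_def by auto
      qed
      have hrt: "h (r + t) = f (\<tau> (k + 1))"
        using rt kn unfolding h_def by auto
      have Bk: "B k = B (Suc k)"
      proof -
        have "B (Suc k) = snd (Fk ((k + 1) mod n))" unfolding B_def by simp
        also have "\<dots> = snd (Fk k)" using eqk by simp
        also have "\<dots> = B k" unfolding B_def using kn by simp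
        finally show ?thesis by simp
      qed
      obtain lam where lam: "lam \<noteq> 0"
        "Complex (X t) c = complex_of_real lam * Complex (\<beta> t) (1 - \<alpha> t)"
        "lam > 0 \<Longrightarrow> \<forall>i. X i \<le> X t" "lam < 0 \<Longrightarrow> \<forall>i. X t \<le> X i"
        using C tn Xt XSt Bk by metis
      define v where "v = Complex (\<beta> t) (1 - \<alpha> t)"
      define W where "W = Complex (X t) c"
      have vn: "v \<noteq> 0" unfolding v_def using nz tn by simp
      have Wv: "W = complex_of_real lam * v" unfolding W_def v_def using lam(2) .
      have th1: "theta (f (\<tau> (k + 1))) = Some (Arg2pi v)"
        using theta_h[of "r + t"] hrt unfolding \<Theta>_def v_def \<alpha>_def \<beta>_def by simp
      have Wnz: "W \<noteq> 0" using Wv vn lam(1) by simp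
      have th2: "theta (Fk k) = Some (Arg2pi W)"
      proof -
        have "vecf (Fk k) = (X t, c)" using FkB[OF kn] Xt unfolding vecf_def c_def by simp
        moreover have "(X t, c) \<noteq> (0, 0)" using Wnz unfolding W_def by (auto simp: complex_eq_iff)
        ultimately show ?thesis unfolding theta_def W_def by simp
      qed
      have MX: "\<forall>i<n. lin_le (Fk i) (Fk k)" if "lam > 0"
        using lam(3)[OF that] le_tr kn BX Xt by (metis)
      have MN: "\<forall>i<n. lin_le (Fk k) (Fk i)" if "lam < 0"
        using lam(4)[OF that] le_tr kn BX Xt by (metis)
      have FA: "((\<forall>i<n. lin_le (Fk k) (Fk i)) \<and> cong2pi (Some (Arg2pi v + pi)) (Some (Arg2pi W))) \<and>
          \<not> ((\<forall>i<n. lin_le (Fk i) (Fk k)) \<and> cong2pi (Some (Arg2pi v)) (Some (Arg2pi W))) \<or>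
          \<not> ((\<forall>i<n. lin_le (Fk k) (Fk i)) \<and> cong2pi (Some (Arg2pi v + pi)) (Some (Arg2pi W))) \<and>
          ((\<forall>i<n. lin_le (Fk i) (Fk k)) \<and> cong2pi (Some (Arg2pi v)) (Some (Arg2pi W)))"
        by (rule final_angle[OF vn Wv lam(1) MX MN])
      show ?thesis unfolding Let_def th1 th2 using FA by simp
    qed
    show ?thesis using part1 part2 unfolding Fk_def by blast
  qed
qed

end
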